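(* Let $A$ be a partial ring and $(X,\mathcal{O}_X)=\mathrm{Spec}(A)$. For any element $s\in A$, there exists a monomorphism (injective homomorphism of partial rings) $A_s\to\mathcal{O}_X(D(s))$.
   Context: A partial ring is a set $A$ with $0$, a set $A_2\subseteq A\times A$ of summable pairs and a partial addition $+\colon A_2\to A$ (with $0$ a unit summable with everything, commutative, and associative in the sense: $(a,b),(a+b,c)\in A_2$ iff $(b,c),(a,b+c)\in A_2$, and then $(a+b)+c=a+(b+c)$), together with a commutative associative multiplication with unit $1$ such that $0\cdot a=0$ and $(a_1,a_2)\in A_2\Rightarrow(a_1x,a_2x)\in A_2$, $(a_1+a_2)x=a_1x+a_2x$. For a multiplicative subset $S$, $S^{-1}A$ is the set of classes $a/s$ with $a/s=b/t$ iff $uta=usb$ for some $u\in S$, product $\frac{a}{s}\frac{b}{t}=\frac{ab}{st}$, and $(a/s,b/t)$ summable iff $(uta,usb)\in A_2$ for some $u\in S$; $A_s$ denotes the localization at $\{s^k:k\in\mathbb{N}\}$. $X=X_A$ is the set of prime ideals of $A$ with topology generated by $D(a)=\{\mathfrak p: a\notin\mathfrak p\}$. For open $U$, $S_U=\{a: a\notin\mathfrak p\ \forall\mathfrak p\in U\}$; $\mathcal{O}_X$ is the sheafification of the presheaf $U\mapsto S_U^{-1}A$. $\mathrm{Spec}(A)=(X_A,\mathcal{O}_X)$. *)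

theory Defs
  imports Complex_Main
begin

record 'a pring =
  pr_carrier :: "'a set"
  pr_zero :: 'a
  pr_one :: 'a
  pr_summ :: "('a \<times> 'a) set"
  pr_add :: "'a \<Rightarrow> 'a \<Rightarrow> 'a"
  pr_mult :: "'a \<Rightarrow> 'a \<Rightarrow> 'a"

definition partial_ring :: "'a pring \<Rightarrow> bool" where
  "partial_ring A \<longleftrightarrow>
     (let C = pr_carrier A; S = pr_summ A; ad = pr_add A; mu = pr_mult A;
          z = pr_zero A; e = pr_one A in
      z \<in> C \<and> e \<in> C \<and> S \<subseteq> C \<times> C
    \<and> (\<forall>(a,b)\<in>S. ad a b \<in> C)
    \<and> (\<forall>a\<in>C. (a, z) \<in> S \<and> ad a z = a)
    \<and> (\<forall>(a,b)\<in>S. (b,a) \<in> S \<and> ad a b = ad b a)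
    \<and> (\<forall>a\<in>C. \<forall>b\<in>C. \<forall>c\<in>C.
          (((a,b) \<in> S \<and> (ad a b, c) \<in> S) \<longleftrightarrow> ((b,c) \<in> S \<and> (a, ad b c) \<in> S))
        \<and> (((a,b) \<in> S \<and> (ad a b, c) \<in> S) \<longrightarrow> ad (ad a b) c = ad a (ad b c)))
    \<and> (\<forall>a\<in>C. \<forall>b\<in>C. mu a b \<in> C)
    \<and> (\<forall>a\<in>C. \<forall>b\<in>C. mu a b = mu b a)
    \<and> (\<forall>a\<in>C. \<forall>b\<in>C. \<forall>c\<in>C. mu (mu a b) c = mu a (mu b c))
    \<and> (\<forall>a\<in>C. mu e a = a)
    \<and> (\<forall>a\<in>C. mu z a = z)
    \<and> (\<forall>(a1,a2)\<in>S. \<forall>x\<in>C. (mu a1 x, mu a2 x) \<in> S \<and> mu (ad a1 a2) x = ad (mu a1 x) (mu a2 x)))"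

definition pr_hom :: "'a pring \<Rightarrow> 'b pring \<Rightarrow> ('a \<Rightarrow> 'b) \<Rightarrow> bool" where
  "pr_hom A B f \<longleftrightarrow>
     f ` pr_carrier A \<subseteq> pr_carrier B
   \<and> f (pr_zero A) = pr_zero B \<and> f (pr_one A) = pr_one B
   \<and> (\<forall>a\<in>pr_carrier A. \<forall>b\<in>pr_carrier A. f (pr_mult A a b) = pr_mult B (f a) (f b))
   \<and> (\<forall>(a,b)\<in>pr_summ A. (f a, f b) \<in> pr_summ B \<and> f (pr_add A a b) = pr_add B (f a) (f b))"

definition pr_mono :: "'a pring \<Rightarrow> 'b pring \<Rightarrow> ('a \<Rightarrow> 'b) \<Rightarrow> bool" where
  "pr_mono A B f \<longleftrightarrow> pr_hom A B f \<and> inj_on f (pr_carrier A)"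

definition pr_pow :: "'a pring \<Rightarrow> 'a \<Rightarrow> nat \<Rightarrow> 'a" where
  "pr_pow A s k = (pr_mult A s ^^ k) (pr_one A)"

definition loc_rel :: "'a pring \<Rightarrow> 'a set \<Rightarrow> (('a \<times> 'a) \<times> ('a \<times> 'a)) set" where
  "loc_rel A S = {((a,s),(b,t)). a \<in> pr_carrier A \<and> s \<in> S \<and> b \<in> pr_carrier A \<and> t \<in> S \<and>
      (\<exists>u\<in>S. pr_mult A u (pr_mult A t a) = pr_mult A u (pr_mult A s b))}"

definition loc_cls :: "'a pring \<Rightarrow> 'a set \<Rightarrow> 'a \<Rightarrow> 'a \<Rightarrow> ('a \<times> 'a) set" where
  "loc_cls A S a s = loc_rel A S `` {(a,s)}"

definition loc :: "'a pring \<Rightarrow> 'a set \<Rightarrow> ('a \<times> 'a) set pring" where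
  "loc A S = \<lparr>
     pr_carrier = (pr_carrier A \<times> S) // loc_rel A S,
     pr_zero = loc_cls A S (pr_zero A) (pr_one A),
     pr_one = loc_cls A S (pr_one A) (pr_one A),
     pr_summ = {(X,Y). X \<in> (pr_carrier A \<times> S) // loc_rel A S \<and> Y \<in> (pr_carrier A \<times> S) // loc_rel A S \<and>
        (\<exists>a s b t u. (a,s) \<in> X \<and> (b,t) \<in> Y \<and> u \<in> S \<and>
           (pr_mult A u (pr_mult A t a), pr_mult A u (pr_mult A s b)) \<in> pr_summ A)},
     pr_add = (\<lambda>X Y. SOME Z. \<exists>a s b t u. (a,s) \<in> X \<and> (b,t) \<in> Y \<and> u \<in> S \<and>
           (pr_mult A u (pr_mult A t a), pr_mult A u (pr_mult A s b)) \<in> pr_summ A \<and>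
           Z = loc_cls A S (pr_add A (pr_mult A u (pr_mult A t a)) (pr_mult A u (pr_mult A s b)))
                           (pr_mult A u (pr_mult A s t))),
     pr_mult = (\<lambda>X Y. SOME Z. \<exists>a s b t. (a,s) \<in> X \<and> (b,t) \<in> Y \<and>
           Z = loc_cls A S (pr_mult A a b) (pr_mult A s t)) \<rparr>"

definition loc_at :: "'a pring \<Rightarrow> 'a \<Rightarrow> ('a \<times> 'a) set pring" where
  "loc_at A s = loc A {pr_pow A s k | k. True}"

definition pr_ideal :: "'a pring \<Rightarrow> 'a set \<Rightarrow> bool" where
  "pr_ideal A I \<longleftrightarrow> I \<subseteq> pr_carrier A \<and> pr_zero A \<in> I
     \<and> (\<forall>a\<in>I. \<forall>b\<in>I. (a,b) \<in> pr_summ A \<longrightarrow> pr_add A a b \<in> I)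
     \<and> (\<forall>a\<in>I. \<forall>x\<in>pr_carrier A. pr_mult A x a \<in> I)"

definition pr_prime :: "'a pring \<Rightarrow> 'a set \<Rightarrow> bool" where
  "pr_prime A P \<longleftrightarrow> pr_ideal A P \<and> P \<noteq> pr_carrier A
     \<and> (\<forall>a\<in>pr_carrier A. \<forall>b\<in>pr_carrier A. pr_mult A a b \<in> P \<longrightarrow> a \<in> P \<or> b \<in> P)"

definition Spec_pts :: "'a pring \<Rightarrow> 'a set set" where
  "Spec_pts A = {P. pr_prime A P}"

definition basicD :: "'a pring \<Rightarrow> 'a \<Rightarrow> 'a set set" where
  "basicD A a = {P \<in> Spec_pts A. a \<notin> P}"

definition spec_open :: "'a pring \<Rightarrow> 'a set set \<Rightarrow> bool" where
  "spec_open A U \<longleftrightarrow> U \<subseteq> Spec_pts A \<and>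
     (generate_topology {basicD A a | a. a \<in> pr_carrier A} U \<or> U = Spec_pts A)"

definition S_of :: "'a pring \<Rightarrow> 'a set set \<Rightarrow> 'a set" where
  "S_of A U = {a \<in> pr_carrier A. \<forall>P\<in>U. a \<notin> P}"

definition presh :: "'a pring \<Rightarrow> 'a set set \<Rightarrow> ('a \<times> 'a) set pring" where
  "presh A U = loc A (S_of A U)"

definition presh_res :: "'a pring \<Rightarrow> 'a set set \<Rightarrow> 'a set set \<Rightarrow> ('a \<times> 'a) set \<Rightarrow> ('a \<times> 'a) set" where
  "presh_res A U V X = (SOME Y. \<exists>a s. (a,s) \<in> X \<and> Y = loc_cls A (S_of A V) a s)"

type_synonym 'a germ = "('a set set \<times> ('a \<times> 'a) set) set"

definition germ_rel :: "'a pring \<Rightarrow> 'a set \<Rightarrow> (('a set set \<times> ('a \<times> 'a) set) \<times> ('a set set \<times> ('a \<times> 'a) set)) set" where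
  "germ_rel A p = {((U,x),(V,y)).
      spec_open A U \<and> p \<in> U \<and> x \<in> pr_carrier (presh A U) \<and>
      spec_open A V \<and> p \<in> V \<and> y \<in> pr_carrier (presh A V) \<and>
      (\<exists>W. spec_open A W \<and> p \<in> W \<and> W \<subseteq> U \<and> W \<subseteq> V \<and>
           presh_res A U W x = presh_res A V W y)}"

definition germ :: "'a pring \<Rightarrow> 'a set \<Rightarrow> 'a set set \<Rightarrow> ('a \<times> 'a) set \<Rightarrow> 'a germ" where
  "germ A p U x = germ_rel A p `` {(U,x)}"

definition stalk_carrier :: "'a pring \<Rightarrow> 'a set \<Rightarrow> 'a germ set" where
  "stalk_carrier A p = {(U,x). spec_open A U \<and> p \<in> U \<and> x \<in> pr_carrier (presh A U)} // germ_rel A p"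

definition stalk :: "'a pring \<Rightarrow> 'a set \<Rightarrow> 'a germ pring" where
  "stalk A p = \<lparr>
     pr_carrier = stalk_carrier A p,
     pr_zero = germ A p (Spec_pts A) (pr_zero (presh A (Spec_pts A))),
     pr_one = germ A p (Spec_pts A) (pr_one (presh A (Spec_pts A))),
     pr_summ = {(g,h). g \<in> stalk_carrier A p \<and> h \<in> stalk_carrier A p \<and>
        (\<exists>W x y. (W,x) \<in> g \<and> (W,y) \<in> h \<and> (x,y) \<in> pr_summ (presh A W))},
     pr_add = (\<lambda>g h. SOME k. \<exists>W x y. (W,x) \<in> g \<and> (W,y) \<in> h \<and> (x,y) \<in> pr_summ (presh A W) \<and>
        k = germ A p W (pr_add (presh A W) x y)),
     pr_mult = (\<lambda>g h. SOME k. \<exists>W x y. (W,x) \<in> g \<and> (W,y) \<in> h \<and>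
        k = germ A p W (pr_mult (presh A W) x y)) \<rparr>"

text \<open>\<open>\<O>_X(U)\<close>: sections of the sheafification over an open \<open>U\<close>, i.e. families of germs
  that are locally induced by a single element of the presheaf; operations pointwise.\<close>
definition OX_carrier :: "'a pring \<Rightarrow> 'a set set \<Rightarrow> ('a set \<Rightarrow> 'a germ) set" where
  "OX_carrier A U = {\<sigma>. (\<forall>p\<in>U. \<sigma> p \<in> stalk_carrier A p) \<and> (\<forall>p. p \<notin> U \<longrightarrow> \<sigma> p = undefined) \<and>
      (\<forall>p\<in>U. \<exists>V x. spec_open A V \<and> p \<in> V \<and> V \<subseteq> U \<and> x \<in> pr_carrier (presh A V) \<and>
                    (\<forall>q\<in>V. \<sigma> q = germ A q V x))}"

definition OX :: "'a pring \<Rightarrow> 'a set set \<Rightarrow> ('a set \<Rightarrow> 'a germ) pring" where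
  "OX A U = \<lparr>
     pr_carrier = OX_carrier A U,
     pr_zero = (\<lambda>p. if p \<in> U then pr_zero (stalk A p) else undefined),
     pr_one = (\<lambda>p. if p \<in> U then pr_one (stalk A p) else undefined),
     pr_summ = {(\<sigma>,\<tau>). \<sigma> \<in> OX_carrier A U \<and> \<tau> \<in> OX_carrier A U \<and>
        (\<forall>p\<in>U. (\<sigma> p, \<tau> p) \<in> pr_summ (stalk A p))},
     pr_add = (\<lambda>\<sigma> \<tau> p. if p \<in> U then pr_add (stalk A p) (\<sigma> p) (\<tau> p) else undefined),
     pr_mult = (\<lambda>\<sigma> \<tau> p. if p \<in> U then pr_mult (stalk A p) (\<sigma> p) (\<tau> p) else undefined) \<rparr>"

end

theory Submission
  imports Defs
begin

locale PR =
  fixes A :: "'a pring"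
  assumes PR: "partial_ring A"
begin

abbreviation "Car \<equiv> pr_carrier A"
abbreviation "mu \<equiv> pr_mult A"
abbreviation "ad \<equiv> pr_add A"
abbreviation "Sm \<equiv> pr_summ A"
abbreviation "zer \<equiv> pr_zero A"
abbreviation "one \<equiv> pr_one A"

lemma zer_C[simp]: "zer \<in> Car" and one_C[simp]: "one \<in> Car"
  using PR unfolding partial_ring_def Let_def by auto

lemma summ_C: "(a,b) \<in> Sm \<Longrightarrow> a \<in> Car \<and> b \<in> Car"
  using PR unfolding partial_ring_def Let_def by auto

lemma add_C[simp]: "(a,b) \<in> Sm \<Longrightarrow> ad a b \<in> Car"
  using PR unfolding partial_ring_def Let_def by auto

lemma mu_C[simp]: "a \<in> Car \<Longrightarrow> b \<in> Car \<Longrightarrow> mu a b \<in> Car"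
  using PR unfolding partial_ring_def Let_def by auto

lemma mu_comm: "a \<in> Car \<Longrightarrow> b \<in> Car \<Longrightarrow> mu a b = mu b a"
  using PR unfolding partial_ring_def Let_def by auto

lemma mu_assoc: "a \<in> Car \<Longrightarrow> b \<in> Car \<Longrightarrow> c \<in> Car \<Longrightarrow> mu (mu a b) c = mu a (mu b c)"
  using PR unfolding partial_ring_def Let_def by auto

lemma mu_lcomm: "a \<in> Car \<Longrightarrow> b \<in> Car \<Longrightarrow> c \<in> Car \<Longrightarrow> mu a (mu b c) = mu b (mu a c)"
  by (metis mu_assoc mu_comm)

lemmas mu_ac = mu_assoc mu_comm mu_lcomm

lemma mu_one[simp]: "a \<in> Car \<Longrightarrow> mu one a = a"
  using PR unfolding partial_ring_def Let_def by auto

lemma mu_one2[simp]: "a \<in> Car \<Longrightarrow> mu a one = a"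
  using mu_one mu_comm one_C by metis

lemma mu_zer[simp]: "a \<in> Car \<Longrightarrow> mu zer a = zer"
  using PR unfolding partial_ring_def Let_def by auto

lemma distr: "(a1,a2) \<in> Sm \<Longrightarrow> x \<in> Car \<Longrightarrow> (mu a1 x, mu a2 x) \<in> Sm \<and> mu (ad a1 a2) x = ad (mu a1 x) (mu a2 x)"
  using PR unfolding partial_ring_def Let_def by fast

lemma ldistr: "(a1,a2) \<in> Sm \<Longrightarrow> x \<in> Car \<Longrightarrow> (mu x a1, mu x a2) \<in> Sm \<and> mu x (ad a1 a2) = ad (mu x a1) (mu x a2)"
  using distr[of a1 a2 x] summ_C[of a1 a2] add_C[of a1 a2] by (simp add: mu_comm)

definition mcl :: "'a set \<Rightarrow> bool" where
  "mcl S \<longleftrightarrow> S \<subseteq> Car \<and> one \<in> S \<and> (\<forall>x\<in>S. \<forall>y\<in>S. mu x y \<in> S)"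

lemma mclD: "mcl S \<Longrightarrow> x \<in> S \<Longrightarrow> x \<in> Car" "mcl S \<Longrightarrow> one \<in> S"
  "mcl S \<Longrightarrow> x \<in> S \<Longrightarrow> y \<in> S \<Longrightarrow> mu x y \<in> S"
  unfolding mcl_def by auto

lemma loc_rel_equiv:
  assumes "mcl S" shows "equiv (Car \<times> S) (loc_rel A S)"
proof (rule equivI)
  show "refl_on (Car \<times> S) (loc_rel A S)"
    by (rule refl_onI) (auto simp: loc_rel_def)
  show "loc_rel A S \<subseteq> (Car \<times> S) \<times> (Car \<times> S)"
    unfolding loc_rel_def by auto
  show "sym (loc_rel A S)"
    unfolding sym_def loc_rel_def by (auto, metis)
  show "trans (loc_rel A S)"
  proof (rule transI)
    fix x y w assume xy: "(x,y) \<in> loc_rel A S" and yw: "(y,w) \<in> loc_rel A S"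
    obtain a s where x: "x = (a,s)" by force
    obtain b t where y: "y = (b,t)" by force
    obtain c q where w: "w = (c,q)" by force
    from xy obtain u where u: "a \<in> Car" "s \<in> S" "b \<in> Car" "t \<in> S" "u \<in> S"
        "mu u (mu t a) = mu u (mu s b)" unfolding x y loc_rel_def by auto
    from yw obtain v where v: "c \<in> Car" "q \<in> S" "v \<in> S"
        "mu v (mu q b) = mu v (mu t c)" unfolding w y loc_rel_def by auto
    have C: "s \<in> Car" "t \<in> Car" "u \<in> Car" "v \<in> Car" "q \<in> Car" using u v mclD[OF assms] by auto
    have "mu (mu u (mu v t)) (mu q a) = mu (mu v q) (mu u (mu t a))"
      using C u(1,3) v(1) by (simp add: mu_ac)
    also have "\<dots> = mu (mu u s) (mu v (mu q b))" using C u(1,3,6) v(1) by (simp add: mu_ac)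
    also have "\<dots> = mu (mu u s) (mu v (mu t c))" using v by simp
    also have "\<dots> = mu (mu u (mu v t)) (mu s c)" using C u(1,3) v(1) by (simp add: mu_ac)
    finally show "(x,w) \<in> loc_rel A S"
      unfolding x w loc_rel_def using u v C mclD[OF assms] by auto
  qed
qed

end

context PR
begin

lemma cls_eq:
  assumes "mcl S" "a \<in> Car" "t \<in> S" "b \<in> Car" "r \<in> S"
  shows "loc_cls A S a t = loc_cls A S b r \<longleftrightarrow> (\<exists>u\<in>S. mu u (mu r a) = mu u (mu t b))"
proof -
  have "loc_cls A S a t = loc_cls A S b r \<longleftrightarrow> ((a,t),(b,r)) \<in> loc_rel A S"
    unfolding loc_cls_def using eq_equiv_class_iff[OF loc_rel_equiv[OF assms(1)]] assms by auto
  also have "\<dots> \<longleftrightarrow> (\<exists>u\<in>S. mu u (mu r a) = mu u (mu t b))"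
    unfolding loc_rel_def using assms by auto
  finally show ?thesis .
qed

lemma mem_cls:
  assumes "mcl S" "a \<in> Car" "t \<in> S" "(b,r) \<in> loc_cls A S a t"
  shows "b \<in> Car" "r \<in> S" "loc_cls A S b r = loc_cls A S a t"
proof -
  have rel: "((a,t),(b,r)) \<in> loc_rel A S" using assms(4) unfolding loc_cls_def by auto
  then show "b \<in> Car" "r \<in> S" unfolding loc_rel_def by auto
  show "loc_cls A S b r = loc_cls A S a t"
    unfolding loc_cls_def using rel loc_rel_equiv[OF assms(1)]
    by (metis equiv_class_eq)
qed

lemma cls_self:
  assumes "mcl S" "a \<in> Car" "t \<in> S"
  shows "(a,t) \<in> loc_cls A S a t"
  unfolding loc_cls_def using equiv_class_self[OF loc_rel_equiv[OF assms(1)]] assms by auto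

lemma cls_in:
  assumes "a \<in> Car" "t \<in> S"
  shows "loc_cls A S a t \<in> (Car \<times> S) // loc_rel A S"
  unfolding loc_cls_def using assms by (auto intro: quotientI)

lemma quotE:
  assumes "mcl S" "X \<in> (Car \<times> S) // loc_rel A S"
  obtains a t where "a \<in> Car" "t \<in> S" "X = loc_cls A S a t"
  using assms(2) unfolding loc_cls_def by (auto elim: quotientE)

lemma mem_quot:
  assumes "mcl S" "X \<in> (Car \<times> S) // loc_rel A S" "(b,r) \<in> X"
  shows "b \<in> Car" "r \<in> S" "X = loc_cls A S b r"
  using assms mem_cls by (metis quotE)+

lemma cls_mono:
  assumes "mcl S" "mcl S'" "S \<subseteq> S'" "a \<in> Car" "t \<in> S" "b \<in> Car" "r \<in> S"
    "loc_cls A S a t = loc_cls A S b r"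
  shows "loc_cls A S' a t = loc_cls A S' b r"
  using assms cls_eq[OF assms(1,4,5,6,7)] cls_eq[OF assms(2,4) _ assms(6)] by blast

lemma mult_wd:
  assumes S: "mcl S" and in1: "a \<in> Car" "t \<in> S" "a' \<in> Car" "t' \<in> S"
    and in2: "b \<in> Car" "r \<in> S" "b' \<in> Car" "r' \<in> S"
    and e1: "loc_cls A S a t = loc_cls A S a' t'" and e2: "loc_cls A S b r = loc_cls A S b' r'"
  shows "loc_cls A S (mu a b) (mu t r) = loc_cls A S (mu a' b') (mu t' r')"
proof -
  from e1 obtain u where u: "u \<in> S" "mu u (mu t' a) = mu u (mu t a')"
    using cls_eq[OF S in1] by auto
  from e2 obtain v where v: "v \<in> S" "mu v (mu r' b) = mu v (mu r b')"
    using cls_eq[OF S in2] by auto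
  have C: "t \<in> Car" "t' \<in> Car" "r \<in> Car" "r' \<in> Car" "u \<in> Car" "v \<in> Car"
    using mclD(1)[OF S] in1 in2 u v by auto
  have "mu (mu u v) (mu (mu t' r') (mu a b)) = mu (mu u (mu t' a)) (mu v (mu r' b))"
    using C in1 in2 by (simp add: mu_ac)
  also have "\<dots> = mu (mu u (mu t a')) (mu v (mu r b'))" using u v by simp
  also have "\<dots> = mu (mu u v) (mu (mu t r) (mu a' b'))"
    using C in1 in2 by (simp add: mu_ac)
  finally show ?thesis
    using cls_eq[OF S, of "mu a b" "mu t r" "mu a' b'" "mu t' r'"] in1 in2 u v mclD[OF S]
    by auto
qed

lemma add_wd:
  assumes S: "mcl S" and in1: "a \<in> Car" "t \<in> S" "a' \<in> Car" "t' \<in> S"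
    and in2: "b \<in> Car" "r \<in> S" "b' \<in> Car" "r' \<in> S"
    and e1: "loc_cls A S a t = loc_cls A S a' t'" and e2: "loc_cls A S b r = loc_cls A S b' r'"
    and uu: "u \<in> S" "u' \<in> S"
    and s1: "(mu u (mu r a), mu u (mu t b)) \<in> Sm"
    and s2: "(mu u' (mu r' a'), mu u' (mu t' b')) \<in> Sm"
  shows "loc_cls A S (ad (mu u (mu r a)) (mu u (mu t b))) (mu u (mu t r)) =
         loc_cls A S (ad (mu u' (mu r' a')) (mu u' (mu t' b'))) (mu u' (mu t' r'))"
proof -
  from e1 obtain w1 where w1: "w1 \<in> S" "mu w1 (mu t' a) = mu w1 (mu t a')"
    using cls_eq[OF S in1] by auto
  from e2 obtain w2 where w2: "w2 \<in> S" "mu w2 (mu r' b) = mu w2 (mu r b')"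
    using cls_eq[OF S in2] by auto
  have C: "t \<in> Car" "t' \<in> Car" "r \<in> Car" "r' \<in> Car" "u \<in> Car" "u' \<in> Car" "w1 \<in> Car" "w2 \<in> Car"
    using mclD(1)[OF S] in1 in2 uu w1 w2 by auto
  define v where "v = mu w1 w2"
  have vC: "v \<in> Car" "v \<in> S" using C w1 w2 mclD[OF S] unfolding v_def by auto
  have "mu v (mu (mu u' (mu t' r')) (ad (mu u (mu r a)) (mu u (mu t b))))
      = ad (mu v (mu (mu u' (mu t' r')) (mu u (mu r a)))) (mu v (mu (mu u' (mu t' r')) (mu u (mu t b))))"
  proof -
    have k: "mu u' (mu t' r') \<in> Car" using C by simp
    have "mu (mu u' (mu t' r')) (ad (mu u (mu r a)) (mu u (mu t b)))
       = ad (mu (mu u' (mu t' r')) (mu u (mu r a))) (mu (mu u' (mu t' r')) (mu u (mu t b)))"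
      and sm: "(mu (mu u' (mu t' r')) (mu u (mu r a)), mu (mu u' (mu t' r')) (mu u (mu t b))) \<in> Sm"
      using ldistr[OF s1 k] by auto
    then show ?thesis using ldistr[OF sm vC(1)] by simp
  qed
  also have "\<dots> = ad (mu (mu w1 (mu t' a)) (mu w2 (mu u' (mu r' (mu u r)))))
                      (mu (mu w2 (mu r' b)) (mu w1 (mu u' (mu t' (mu u t)))))"
    using C in1 in2 unfolding v_def by (simp add: mu_ac)
  also have "\<dots> = ad (mu (mu w1 (mu t a')) (mu w2 (mu u' (mu r' (mu u r)))))
                      (mu (mu w2 (mu r b')) (mu w1 (mu u' (mu t' (mu u t)))))"
    using w1 w2 by simp
  also have "\<dots> = ad (mu v (mu (mu u (mu t r)) (mu u' (mu r' a')))) (mu v (mu (mu u (mu t r)) (mu u' (mu t' b'))))"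
    using C in1 in2 unfolding v_def by (simp add: mu_ac)
  also have "\<dots> = mu v (mu (mu u (mu t r)) (ad (mu u' (mu r' a')) (mu u' (mu t' b'))))"
  proof -
    have k: "mu u (mu t r) \<in> Car" using C by simp
    have "mu (mu u (mu t r)) (ad (mu u' (mu r' a')) (mu u' (mu t' b')))
       = ad (mu (mu u (mu t r)) (mu u' (mu r' a'))) (mu (mu u (mu t r)) (mu u' (mu t' b')))"
      and sm: "(mu (mu u (mu t r)) (mu u' (mu r' a')), mu (mu u (mu t r)) (mu u' (mu t' b'))) \<in> Sm"
      using ldistr[OF s2 k] by auto
    then show ?thesis using ldistr[OF sm vC(1)] by simp
  qed
  finally have eq: "mu v (mu (mu u' (mu t' r')) (ad (mu u (mu r a)) (mu u (mu t b))))
     = mu v (mu (mu u (mu t r)) (ad (mu u' (mu r' a')) (mu u' (mu t' b'))))" .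
  show ?thesis
    apply (subst cls_eq[OF S])
    using s1 s2 C uu in1 in2 mclD[OF S] vC eq by auto
qed

lemma loc_carrier: "pr_carrier (loc A S) = (Car \<times> S) // loc_rel A S"
  unfolding loc_def by simp

lemma loc_mult:
  assumes S: "mcl S" and "a \<in> Car" "t \<in> S" "b \<in> Car" "r \<in> S"
  shows "pr_mult (loc A S) (loc_cls A S a t) (loc_cls A S b r) = loc_cls A S (mu a b) (mu t r)"
  unfolding loc_def apply simp
  apply (rule someI2[where a="loc_cls A S (mu a b) (mu t r)"])
  using assms cls_self[OF S] apply blast
  using assms mem_cls[OF S] mult_wd[OF S] by metis

lemma loc_add:
  assumes S: "mcl S" and ins: "a \<in> Car" "t \<in> S" "b \<in> Car" "r \<in> S" "u \<in> S"
    and sm: "(mu u (mu r a), mu u (mu t b)) \<in> Sm"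
  shows "(loc_cls A S a t, loc_cls A S b r) \<in> pr_summ (loc A S)"
    "pr_add (loc A S) (loc_cls A S a t) (loc_cls A S b r) =
       loc_cls A S (ad (mu u (mu r a)) (mu u (mu t b))) (mu u (mu t r))"
proof -
  show "(loc_cls A S a t, loc_cls A S b r) \<in> pr_summ (loc A S)"
    unfolding loc_def apply simp
    using assms cls_self[OF S] cls_in by blast
  show "pr_add (loc A S) (loc_cls A S a t) (loc_cls A S b r) =
       loc_cls A S (ad (mu u (mu r a)) (mu u (mu t b))) (mu u (mu t r))"
    unfolding loc_def apply simp
    apply (rule someI2[where a="loc_cls A S (ad (mu u (mu r a)) (mu u (mu t b))) (mu u (mu t r))"])
    using assms cls_self[OF S] apply blast
    apply (elim exE conjE)
    subgoal for Z a1 s1 b1 t1 u1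
      using add_wd[OF S, of a1 s1 a t b1 t1 b r u1 u] mem_cls[OF S, of a t a1 s1]
        mem_cls[OF S, of b r b1 t1] assms by auto
    done
qed

end

context PR
begin

lemma prime_one: "pr_prime A P \<Longrightarrow> one \<notin> P"
  unfolding pr_prime_def pr_ideal_def
  by (metis mu_one2 subsetI subset_antisym)

lemma mcl_S_of: "V \<subseteq> Spec_pts A \<Longrightarrow> mcl (S_of A V)"
proof -
  assume V: "V \<subseteq> Spec_pts A"
  have pr: "\<And>P. P \<in> V \<Longrightarrow> pr_prime A P" using V unfolding Spec_pts_def by auto
  show ?thesis unfolding mcl_def S_of_def
  proof (intro conjI ballI)
    show "one \<in> {a \<in> Car. \<forall>P\<in>V. a \<notin> P}" using pr prime_one by auto
    fix x y assume x: "x \<in> {a \<in> Car. \<forall>P\<in>V. a \<notin> P}" and y: "y \<in> {a \<in> Car. \<forall>P\<in>V. a \<notin> P}"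
    show "mu x y \<in> {a \<in> Car. \<forall>P\<in>V. a \<notin> P}"
    proof (simp, intro conjI ballI)
      show "mu x y \<in> Car" using x y by simp
      fix P assume "P \<in> V"
      then show "mu x y \<notin> P" using pr[of P] x y unfolding pr_prime_def by auto
    qed
  qed auto
qed

lemma S_of_anti: "V \<subseteq> W \<Longrightarrow> S_of A W \<subseteq> S_of A V"
  unfolding S_of_def by auto

lemma pow_Suc: "pr_pow A s (Suc k) = mu s (pr_pow A s k)"
  unfolding pr_pow_def by simp

lemma pow_0: "pr_pow A s 0 = one"
  unfolding pr_pow_def by simp

lemma pow_C: "s \<in> Car \<Longrightarrow> pr_pow A s k \<in> Car"
  by (induct k) (auto simp: pow_Suc pow_0)

lemma pow_add: "s \<in> Car \<Longrightarrow> mu (pr_pow A s m) (pr_pow A s n) = pr_pow A s (m + n)"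
  by (induct m) (auto simp: pow_Suc pow_0 pow_C mu_assoc)

definition pows where "pows s = {pr_pow A s k | k. True}"

lemma mcl_pows: "s \<in> Car \<Longrightarrow> mcl (pows s)"
proof -
  assume s: "s \<in> Car"
  show ?thesis unfolding mcl_def pows_def
  proof (intro conjI ballI subsetI)
    show "one \<in> {pr_pow A s k |k. True}" using pow_0[of s] by (auto intro!: exI[of _ 0])
  next
    fix x assume "x \<in> {pr_pow A s k |k. True}" then show "x \<in> Car" using pow_C[OF s] by auto
  next
    fix x y assume "x \<in> {pr_pow A s k |k. True}" "y \<in> {pr_pow A s k |k. True}"
    then obtain m n where "x = pr_pow A s m" "y = pr_pow A s n" by auto
    then show "mu x y \<in> {pr_pow A s k |k. True}" using pow_add[OF s, of m n] by auto
  qed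
qed

lemma s_pows: "s \<in> Car \<Longrightarrow> s \<in> pows s"
  unfolding pows_def using pow_Suc[of s 0] pow_0[of s] by (auto intro!: exI[of _ "Suc 0"])

lemma pows_S_of: "s \<in> Car \<Longrightarrow> pows s \<subseteq> S_of A (basicD A s)"
proof
  fix x assume s: "s \<in> Car" and "x \<in> pows s"
  then obtain k where x: "x = pr_pow A s k" unfolding pows_def by auto
  have "\<forall>P\<in>basicD A s. pr_pow A s k \<notin> P"
  proof (induct k)
    case 0 then show ?case using prime_one unfolding basicD_def Spec_pts_def pow_0 by auto
  next
    case (Suc k)
    show ?case
    proof
      fix P assume P: "P \<in> basicD A s"
      then have pp: "pr_prime A P" "s \<notin> P" unfolding basicD_def Spec_pts_def by auto
      have "pr_pow A s k \<notin> P" using Suc P by blast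
      then show "pr_pow A s (Suc k) \<notin> P" unfolding pow_Suc
        using pp pow_C[OF s, of k] s unfolding pr_prime_def by blast
    qed
  qed
  then show "x \<in> S_of A (basicD A s)" unfolding S_of_def x using pow_C s by auto
qed

lemma presh_res_cls:
  assumes T: "mcl T" and V: "V \<subseteq> Spec_pts A" and sub: "T \<subseteq> S_of A V"
    and a: "a \<in> Car" "t \<in> T"
  shows "presh_res A U V (loc_cls A T a t) = loc_cls A (S_of A V) a t"
  unfolding presh_res_def
  apply (rule someI2[where a="loc_cls A (S_of A V) a t"])
  using cls_self[OF T a] apply blast
  apply (elim exE conjE)
  subgoal for Y a' t'
    using mem_cls[OF T a, of a' t'] cls_mono[OF T mcl_S_of[OF V] sub] a by metis
  done

lemma basicD_sub: "basicD A s \<subseteq> Spec_pts A"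
  unfolding basicD_def by auto

lemma spec_open_basic: "s \<in> Car \<Longrightarrow> spec_open A (basicD A s)"
  unfolding spec_open_def using basicD_sub by (auto intro: generate_topology.Basis)

lemma spec_open_Spec: "spec_open A (Spec_pts A)"
  unfolding spec_open_def by auto

lemma spec_open_Int: "spec_open A U \<Longrightarrow> spec_open A V \<Longrightarrow> spec_open A (U \<inter> V)"
  unfolding spec_open_def
proof (elim conjE disjE)
  fix B
  assume "U \<subseteq> Spec_pts A" "V \<subseteq> Spec_pts A" "generate_topology B U" "generate_topology B V"
  then show "U \<inter> V \<subseteq> Spec_pts A \<and> (generate_topology B (U \<inter> V) \<or> U \<inter> V = Spec_pts A)"
    by (auto intro: generate_topology.Int)
qed (auto simp: Int_absorb1 Int_absorb2)

lemma spec_open_sub: "spec_open A U \<Longrightarrow> U \<subseteq> Spec_pts A"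
  unfolding spec_open_def by auto

lemma presh_carrier: "pr_carrier (presh A U) = (Car \<times> S_of A U) // loc_rel A (S_of A U)"
  unfolding presh_def loc_def by simp

end

context PR
begin

definition Dp where "Dp p = {(U,x). spec_open A U \<and> p \<in> U \<and> x \<in> pr_carrier (presh A U)}"

lemma opn_mcl: "spec_open A U \<Longrightarrow> mcl (S_of A U)"
  using mcl_S_of spec_open_sub by blast

lemma germ_rel_cls:
  assumes U: "spec_open A U" and V: "spec_open A V" and p: "p \<in> U" "p \<in> V"
    and a: "a \<in> Car" "t \<in> S_of A U" and b: "b \<in> Car" "r \<in> S_of A V"
  shows "((U, loc_cls A (S_of A U) a t),(V, loc_cls A (S_of A V) b r)) \<in> germ_rel A p \<longleftrightarrow>
     (\<exists>W. spec_open A W \<and> p \<in> W \<and> W \<subseteq> U \<and> W \<subseteq> V \<and>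
        loc_cls A (S_of A W) a t = loc_cls A (S_of A W) b r)"
proof -
  have res: "presh_res A U W (loc_cls A (S_of A U) a t) = loc_cls A (S_of A W) a t"
     "presh_res A V W (loc_cls A (S_of A V) b r) = loc_cls A (S_of A W) b r"
    if "spec_open A W" "W \<subseteq> U" "W \<subseteq> V" for W
    using presh_res_cls[OF opn_mcl[OF U] spec_open_sub[OF that(1)] S_of_anti[OF that(2)] a]
      presh_res_cls[OF opn_mcl[OF V] spec_open_sub[OF that(1)] S_of_anti[OF that(3)] b] by auto
  have c: "loc_cls A (S_of A U) a t \<in> pr_carrier (presh A U)"
     "loc_cls A (S_of A V) b r \<in> pr_carrier (presh A V)"
    using cls_in a b presh_carrier by auto
  show ?thesis
    unfolding germ_rel_def using U V p c res by auto
qed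

lemma presh_quotE:
  assumes "spec_open A U" "x \<in> pr_carrier (presh A U)"
  obtains a t where "a \<in> Car" "t \<in> S_of A U" "x = loc_cls A (S_of A U) a t"
  using quotE[OF opn_mcl[OF assms(1)]] assms(2) presh_carrier by metis

lemma germ_rel_D: "(g,h) \<in> germ_rel A p \<Longrightarrow> g \<in> Dp p \<and> h \<in> Dp p"
  unfolding germ_rel_def Dp_def by auto

lemma germ_rel_equiv: "equiv (Dp p) (germ_rel A p)"
proof (rule equivI)
  show "germ_rel A p \<subseteq> Dp p \<times> Dp p" using germ_rel_D by auto
  show "refl_on (Dp p) (germ_rel A p)"
  proof (rule refl_onI)
    fix g assume "g \<in> Dp p"
    then obtain U x where g: "g = (U,x)" "spec_open A U" "p \<in> U" "x \<in> pr_carrier (presh A U)"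
      unfolding Dp_def by auto
    then obtain a t where "a \<in> Car" "t \<in> S_of A U" "x = loc_cls A (S_of A U) a t"
      using presh_quotE by metis
    then show "(g,g) \<in> germ_rel A p" using germ_rel_cls g by auto
  qed
  show "sym (germ_rel A p)"
  proof (rule symI)
    fix g h assume gh: "(g,h) \<in> germ_rel A p"
    obtain U x where g: "g = (U,x)" by force
    obtain V y where h: "h = (V,y)" by force
    from gh show "(h,g) \<in> germ_rel A p" unfolding g h germ_rel_def
      by (simp only: mem_Collect_eq case_prod_conv) blast
  qed
  show "trans (germ_rel A p)"
  proof (rule transI)
    fix g h k assume gh: "(g,h) \<in> germ_rel A p" and hk: "(h,k) \<in> germ_rel A p"
    obtain U x where g: "g = (U,x)" by force
    obtain V y where h: "h = (V,y)" by force
    obtain Z z where k: "k = (Z,z)" by force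
    have D: "spec_open A U" "p \<in> U" "x \<in> pr_carrier (presh A U)"
        "spec_open A V" "p \<in> V" "y \<in> pr_carrier (presh A V)"
        "spec_open A Z" "p \<in> Z" "z \<in> pr_carrier (presh A Z)"
      using germ_rel_D[OF gh] germ_rel_D[OF hk] unfolding Dp_def g h k by auto
    obtain a t where a: "a \<in> Car" "t \<in> S_of A U" "x = loc_cls A (S_of A U) a t"
      using presh_quotE D by metis
    obtain b r where b: "b \<in> Car" "r \<in> S_of A V" "y = loc_cls A (S_of A V) b r"
      using presh_quotE D by metis
    obtain c q where c: "c \<in> Car" "q \<in> S_of A Z" "z = loc_cls A (S_of A Z) c q"
      using presh_quotE D by metis
    from gh obtain W1 where W1: "spec_open A W1" "p \<in> W1" "W1 \<subseteq> U" "W1 \<subseteq> V"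
      "loc_cls A (S_of A W1) a t = loc_cls A (S_of A W1) b r"
      using germ_rel_cls[OF D(1,4,2,5) a(1,2) b(1,2)] g h a b by auto
    from hk obtain W2 where W2: "spec_open A W2" "p \<in> W2" "W2 \<subseteq> V" "W2 \<subseteq> Z"
      "loc_cls A (S_of A W2) b r = loc_cls A (S_of A W2) c q"
      using germ_rel_cls[OF D(4,7,5,8) b(1,2) c(1,2)] k h c b by auto
    define W where "W = W1 \<inter> W2"
    have W: "spec_open A W" "p \<in> W" "W \<subseteq> U" "W \<subseteq> Z"
      using W1 W2 spec_open_Int unfolding W_def by auto
    have m: "mcl (S_of A W)" "mcl (S_of A W1)" "mcl (S_of A W2)" using opn_mcl W W1 W2 by auto
    have s1: "S_of A W1 \<subseteq> S_of A W" "S_of A W2 \<subseteq> S_of A W"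
      using S_of_anti unfolding W_def by auto
    have sU: "S_of A U \<subseteq> S_of A W1" "S_of A V \<subseteq> S_of A W1" "S_of A V \<subseteq> S_of A W2" "S_of A Z \<subseteq> S_of A W2"
      using S_of_anti W1 W2 by auto
    have "loc_cls A (S_of A W) a t = loc_cls A (S_of A W) b r"
      using cls_mono[OF m(2,1) s1(1) a(1) _ b(1) _ W1(5)] a b sU by auto
    also have "\<dots> = loc_cls A (S_of A W) c q"
      using cls_mono[OF m(3,1) s1(2) b(1) _ c(1) _ W2(5)] c b sU by auto
    finally show "(g,k) \<in> germ_rel A p"
      using germ_rel_cls[OF D(1,7,2,8) a(1,2) c(1,2)] W g k a c by auto
  qed
qed

lemma germ_eq_iff:
  assumes "(U,x) \<in> Dp p" "(V,y) \<in> Dp p"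
  shows "germ A p U x = germ A p V y \<longleftrightarrow> ((U,x),(V,y)) \<in> germ_rel A p"
  unfolding germ_def using eq_equiv_class_iff[OF germ_rel_equiv assms] by simp

lemma germ_mem: "(W,y) \<in> germ A p U x \<longleftrightarrow> ((U,x),(W,y)) \<in> germ_rel A p"
  unfolding germ_def by auto

lemma Dp_cls:
  assumes "spec_open A U" "p \<in> U" "a \<in> Car" "t \<in> S_of A U"
  shows "(U, loc_cls A (S_of A U) a t) \<in> Dp p"
  unfolding Dp_def using assms cls_in presh_carrier by auto

lemma germ_self:
  assumes "spec_open A U" "p \<in> U" "a \<in> Car" "t \<in> S_of A U"
  shows "(U, loc_cls A (S_of A U) a t) \<in> germ A p U (loc_cls A (S_of A U) a t)"
  unfolding germ_def using equiv_class_self[OF germ_rel_equiv Dp_cls[OF assms]] .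

lemma germ_cls_eq:
  assumes U: "spec_open A U" and V: "spec_open A V" and p: "p \<in> U" "p \<in> V"
    and a: "a \<in> Car" "t \<in> S_of A U" and b: "b \<in> Car" "r \<in> S_of A V"
  shows "germ A p U (loc_cls A (S_of A U) a t) = germ A p V (loc_cls A (S_of A V) b r) \<longleftrightarrow>
     (\<exists>W. spec_open A W \<and> p \<in> W \<and> W \<subseteq> U \<and> W \<subseteq> V \<and>
        loc_cls A (S_of A W) a t = loc_cls A (S_of A W) b r)"
  using germ_eq_iff[OF Dp_cls[OF U p(1) a] Dp_cls[OF V p(2) b]] germ_rel_cls[OF assms] by simp

end

context PR
begin

inductive_set gen :: "'a set \<Rightarrow> 'a \<Rightarrow> 'a set" for M a where
  g_base: "m \<in> M \<Longrightarrow> m \<in> gen M a"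
| g_gen: "x \<in> Car \<Longrightarrow> mu x a \<in> gen M a"
| g_add: "x \<in> gen M a \<Longrightarrow> y \<in> gen M a \<Longrightarrow> (x,y) \<in> Sm \<Longrightarrow> ad x y \<in> gen M a"
| g_mul: "x \<in> gen M a \<Longrightarrow> c \<in> Car \<Longrightarrow> mu c x \<in> gen M a"

lemma gen_C: assumes "M \<subseteq> Car" "a \<in> Car" "x \<in> gen M a" shows "x \<in> Car"
  using assms(3) by induct (use assms in auto)

lemma gen_ideal: "pr_ideal A M \<Longrightarrow> a \<in> Car \<Longrightarrow> pr_ideal A (gen M a)"
proof -
  assume M: "pr_ideal A M" and a: "a \<in> Car"
  have MC: "M \<subseteq> Car" using M unfolding pr_ideal_def by auto
  have z: "zer \<in> M" using M unfolding pr_ideal_def by auto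
  show ?thesis unfolding pr_ideal_def
    using gen_C[OF MC a] g_base[OF z] g_add g_mul by blast
qed

lemma ideal_mul: "pr_ideal A M \<Longrightarrow> m \<in> M \<Longrightarrow> x \<in> Car \<Longrightarrow> mu x m \<in> M"
  unfolding pr_ideal_def by auto

lemma ideal_mul2: "pr_ideal A M \<Longrightarrow> m \<in> M \<Longrightarrow> x \<in> Car \<Longrightarrow> mu m x \<in> M"
  unfolding pr_ideal_def by (metis mu_comm subsetD)

lemma ideal_add: "pr_ideal A M \<Longrightarrow> x \<in> M \<Longrightarrow> y \<in> M \<Longrightarrow> (x,y) \<in> Sm \<Longrightarrow> ad x y \<in> M"
  unfolding pr_ideal_def by auto

lemma ideal_C: "pr_ideal A M \<Longrightarrow> M \<subseteq> Car"
  unfolding pr_ideal_def by auto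

lemma gen_prod:
  assumes M: "pr_ideal A M" and a: "a \<in> Car" and b: "b \<in> Car" and ab: "mu a b \<in> M"
    and x: "x \<in> gen M a" and y: "y \<in> gen M b"
  shows "mu x y \<in> M"
  using x y
proof (induct x arbitrary: y rule: gen.induct)
  case (g_base m)
  then show ?case using ideal_mul2[OF M] gen_C[OF ideal_C[OF M] b] by auto
next
  case (g_gen c)
  from g_gen(2) show ?case
  proof (induct y rule: gen.induct)
    case (g_base m) then show ?case using ideal_mul[OF M] g_gen a by auto
  next
    case (g_gen d)
    have "mu (mu c a) (mu d b) = mu (mu c d) (mu a b)"
      using g_gen a b \<open>c \<in> Car\<close> by (simp add: mu_ac)
    then show ?case using ideal_mul[OF M ab] g_gen \<open>c \<in> Car\<close> by simp
  next
    case (g_add y1 y2)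
    have C: "y1 \<in> Car" "y2 \<in> Car" "mu c a \<in> Car"
      using gen_C[OF ideal_C[OF M] b] g_add a \<open>c \<in> Car\<close> by auto
    from ldistr[OF g_add(5) C(3)] have
      "(mu (mu c a) y1, mu (mu c a) y2) \<in> Sm" "mu (mu c a) (ad y1 y2) = ad (mu (mu c a) y1) (mu (mu c a) y2)"
      by auto
    then show ?case using ideal_add[OF M] g_add by auto
  next
    case (g_mul y d)
    have C: "y \<in> Car" "mu c a \<in> Car"
      using gen_C[OF ideal_C[OF M] b] g_mul a \<open>c \<in> Car\<close> by auto
    have "mu (mu c a) (mu d y) = mu d (mu (mu c a) y)" using C g_mul by (simp add: mu_ac)
    then show ?case using ideal_mul[OF M] g_mul by auto
  qed
next
  case (g_add x1 x2)
  have C: "x1 \<in> Car" "x2 \<in> Car" "y \<in> Car"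
    using gen_C[OF ideal_C[OF M]] g_add a b by auto
  from distr[OF g_add(5) C(3)] show ?case using ideal_add[OF M] g_add by auto
next
  case (g_mul x c)
  have C: "x \<in> Car" "y \<in> Car"
    using gen_C[OF ideal_C[OF M]] g_mul a b by auto
  have "mu (mu c x) y = mu c (mu x y)" using C g_mul by (simp add: mu_ac)
  then show ?case using ideal_mul[OF M] g_mul by auto
qed

lemma prime_exists:
  assumes I: "pr_ideal A I" and T: "one \<in> T" "\<forall>x\<in>T. \<forall>y\<in>T. mu x y \<in> T" and dis: "I \<inter> T = {}"
  shows "\<exists>P. pr_prime A P \<and> I \<subseteq> P \<and> P \<inter> T = {}"
proof -
  define F where "F = {J. pr_ideal A J \<and> I \<subseteq> J \<and> J \<inter> T = {}}"
  have "F \<noteq> {}" using I dis unfolding F_def by auto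
  moreover have "\<Union>\<C> \<in> F" if ne: "\<C> \<noteq> {}" and ch: "subset.chain F \<C>" for \<C>
  proof -
    have sub: "\<C> \<subseteq> F" and lin: "\<forall>X\<in>\<C>. \<forall>Y\<in>\<C>. X \<subseteq> Y \<or> Y \<subseteq> X"
      using ch unfolding subset_chain_def by auto
    have idl: "\<And>J. J \<in> \<C> \<Longrightarrow> pr_ideal A J \<and> I \<subseteq> J \<and> J \<inter> T = {}" using sub unfolding F_def by auto
    have "pr_ideal A (\<Union>\<C>)"
      unfolding pr_ideal_def
    proof (intro conjI ballI impI)
      show "\<Union>\<C> \<subseteq> Car" using idl ideal_C by (meson Sup_le_iff)
      obtain J where "J \<in> \<C>" using ne by auto
      then have "zer \<in> J" using idl[of J] unfolding pr_ideal_def by auto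
      then show "zer \<in> \<Union>\<C>" using \<open>J \<in> \<C>\<close> by auto
    next
      fix x y assume x: "x \<in> \<Union>\<C>" and y: "y \<in> \<Union>\<C>" and s: "(x,y) \<in> Sm"
      then obtain X Y where XY: "X \<in> \<C>" "Y \<in> \<C>" "x \<in> X" "y \<in> Y" by auto
      show "ad x y \<in> \<Union>\<C>"
      proof (cases "X \<subseteq> Y")
        case True
        then have "ad x y \<in> Y" using ideal_add[of Y x y] idl[OF XY(2)] XY s by auto
        then show ?thesis using XY by auto
      next
        case False
        then have "Y \<subseteq> X" using lin XY by auto
        then have "ad x y \<in> X" using ideal_add[of X x y] idl[OF XY(1)] XY s by auto
        then show ?thesis using XY by auto
      qed
    next
      fix x c assume x: "x \<in> \<Union>\<C>" and c: "c \<in> Car"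
      then obtain X where "X \<in> \<C>" "x \<in> X" by auto
      then show "mu c x \<in> \<Union>\<C>" using idl[of X] ideal_mul[of X x c] c by auto
    qed
    moreover have "I \<subseteq> \<Union>\<C>" using idl ne by blast
    moreover have "\<Union>\<C> \<inter> T = {}" using idl by blast
    ultimately show ?thesis unfolding F_def by blast
  qed
  ultimately obtain M where MF: "M \<in> F" and max: "\<forall>X\<in>F. M \<subseteq> X \<longrightarrow> X = M"
    using subset_Zorn_nonempty[of F] by blast
  have M: "pr_ideal A M" "I \<subseteq> M" "M \<inter> T = {}" using MF unfolding F_def by auto
  have meet: "gen M c \<inter> T \<noteq> {}" if c: "c \<in> Car" "c \<notin> M" for c
  proof
    assume "gen M c \<inter> T = {}"
    moreover have "M \<subseteq> gen M c" by (auto intro: g_base)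
    ultimately have "gen M c \<in> F" using gen_ideal[OF M(1) c(1)] M unfolding F_def by auto
    then have "gen M c = M" using max \<open>M \<subseteq> gen M c\<close> by auto
    moreover have "c \<in> gen M c" using g_gen[where x=one and M=M and a=c] c by simp
    ultimately show False using c by auto
  qed
  have "pr_prime A M"
    unfolding pr_prime_def
  proof (intro conjI ballI impI)
    show "pr_ideal A M" by (fact M(1))
    show "M \<noteq> Car" using M(3) T(1) one_C by auto
  next
    fix a b assume a: "a \<in> Car" and b: "b \<in> Car" and ab: "mu a b \<in> M"
    show "a \<in> M \<or> b \<in> M"
    proof (rule ccontr)
      assume "\<not> (a \<in> M \<or> b \<in> M)"
      then have "gen M a \<inter> T \<noteq> {}" "gen M b \<inter> T \<noteq> {}" using meet a b by auto
      then obtain x y where "x \<in> gen M a" "x \<in> T" "y \<in> gen M b" "y \<in> T"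
        by blast
      then have "mu x y \<in> M" "mu x y \<in> T" using gen_prod[OF M(1) a b ab] T by auto
      then show False using M(3) by auto
    qed
  qed
  then show ?thesis using M by auto
qed

end

context PR
begin

lemma presh_mult: "pr_mult (presh A W) = pr_mult (loc A (S_of A W))"
  unfolding presh_def by simp

lemma presh_add: "pr_add (presh A W) = pr_add (loc A (S_of A W))"
  unfolding presh_def by simp

lemma presh_summ: "pr_summ (presh A W) = pr_summ (loc A (S_of A W))"
  unfolding presh_def by simp

lemma germ_in_Dp:
  assumes "(W,x') \<in> germ A p U x"
  shows "spec_open A W" "p \<in> W" "x' \<in> pr_carrier (presh A W)" "((U,x),(W,x')) \<in> germ_rel A p"
  using germ_rel_D[of "(U,x)" "(W,x')" p] assms unfolding germ_mem Dp_def by auto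

lemma transfer:
  assumes "spec_open A U" "spec_open A W" "p \<in> U" "p \<in> W" "a \<in> Car" "t \<in> S_of A U"
    "(W,x') \<in> germ A p U (loc_cls A (S_of A U) a t)"
  obtains a' t' W1 where "a' \<in> Car" "t' \<in> S_of A W" "x' = loc_cls A (S_of A W) a' t'"
    "spec_open A W1" "p \<in> W1" "W1 \<subseteq> U" "W1 \<subseteq> W"
    "loc_cls A (S_of A W1) a t = loc_cls A (S_of A W1) a' t'"
proof -
  have x': "x' \<in> pr_carrier (presh A W)" and rel: "((U,loc_cls A (S_of A U) a t),(W,x')) \<in> germ_rel A p"
    using germ_in_Dp[OF assms(7)] by auto
  obtain a' t' where a': "a' \<in> Car" "t' \<in> S_of A W" "x' = loc_cls A (S_of A W) a' t'"
    using presh_quotE[OF assms(2) x'] by metis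
  obtain W1 where "spec_open A W1" "p \<in> W1" "W1 \<subseteq> U" "W1 \<subseteq> W"
    "loc_cls A (S_of A W1) a t = loc_cls A (S_of A W1) a' t'"
    using rel germ_rel_cls[OF assms(1,2,3,4,5,6) a'(1,2)] a'(3) by auto
  then show ?thesis using that a' by blast
qed

lemma cls_shrink:
  assumes "spec_open A W1" "spec_open A W3" "W3 \<subseteq> W1" "a \<in> Car" "t \<in> S_of A W1"
    "b \<in> Car" "r \<in> S_of A W1"
    "loc_cls A (S_of A W1) a t = loc_cls A (S_of A W1) b r"
  shows "loc_cls A (S_of A W3) a t = loc_cls A (S_of A W3) b r"
  using cls_mono[OF opn_mcl[OF assms(1)] opn_mcl[OF assms(2)] S_of_anti[OF assms(3)]] assms by blast

lemma stalk_carrier_Dp: "stalk_carrier A p = Dp p // germ_rel A p"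
  unfolding stalk_carrier_def Dp_def by simp

lemma germ_in_stalk:
  assumes "spec_open A U" "p \<in> U" "a \<in> Car" "t \<in> S_of A U"
  shows "germ A p U (loc_cls A (S_of A U) a t) \<in> stalk_carrier A p"
  unfolding stalk_carrier_Dp germ_def using Dp_cls[OF assms] by (rule quotientI)


lemma stalk_mult:
  assumes U: "spec_open A U" and p: "p \<in> U" and a: "a \<in> Car" "t \<in> S_of A U"
    and b: "b \<in> Car" "r \<in> S_of A U"
  shows "pr_mult (stalk A p) (germ A p U (loc_cls A (S_of A U) a t)) (germ A p U (loc_cls A (S_of A U) b r))
     = germ A p U (loc_cls A (S_of A U) (mu a b) (mu t r))"
  unfolding stalk_def pring.select_convs
proof (rule someI2)
  let ?x = "loc_cls A (S_of A U) a t" and ?y = "loc_cls A (S_of A U) b r"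
  have mU: "mcl (S_of A U)" using opn_mcl[OF U] .
  show "\<exists>W x y. (W, x) \<in> germ A p U ?x \<and> (W, y) \<in> germ A p U ?y \<and>
     germ A p U (loc_cls A (S_of A U) (mu a b) (mu t r)) = germ A p W (pr_mult (presh A W) x y)"
    using germ_self[OF U p a] germ_self[OF U p b] loc_mult[OF mU a b] unfolding presh_mult by metis
  fix k assume "\<exists>W x y. (W, x) \<in> germ A p U ?x \<and> (W, y) \<in> germ A p U ?y \<and>
     k = germ A p W (pr_mult (presh A W) x y)"
  then obtain W x' y' where x': "(W, x') \<in> germ A p U ?x" and y': "(W, y') \<in> germ A p U ?y"
    and k: "k = germ A p W (pr_mult (presh A W) x' y')" by blast
  have W: "spec_open A W" "p \<in> W" using germ_in_Dp[OF x'] by auto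
  obtain a' t' W1 where A1: "a' \<in> Car" "t' \<in> S_of A W" "x' = loc_cls A (S_of A W) a' t'"
    "spec_open A W1" "p \<in> W1" "W1 \<subseteq> U" "W1 \<subseteq> W"
    "loc_cls A (S_of A W1) a t = loc_cls A (S_of A W1) a' t'"
    using transfer[OF U W(1) p W(2) a x'] by metis
  obtain b' r' W2 where B1: "b' \<in> Car" "r' \<in> S_of A W" "y' = loc_cls A (S_of A W) b' r'"
    "spec_open A W2" "p \<in> W2" "W2 \<subseteq> U" "W2 \<subseteq> W"
    "loc_cls A (S_of A W2) b r = loc_cls A (S_of A W2) b' r'"
    using transfer[OF U W(1) p W(2) b y'] by metis
  define W3 where "W3 = W1 \<inter> W2"
  have W3: "spec_open A W3" "p \<in> W3" "W3 \<subseteq> U" "W3 \<subseteq> W" "W3 \<subseteq> W1" "W3 \<subseteq> W2"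
    using spec_open_Int A1 B1 unfolding W3_def by auto
  have m3: "mcl (S_of A W3)" using opn_mcl W3 by auto
  have sub: "S_of A U \<subseteq> S_of A W1" "S_of A W \<subseteq> S_of A W1" "S_of A U \<subseteq> S_of A W2" "S_of A W \<subseteq> S_of A W2"
    "S_of A U \<subseteq> S_of A W3" "S_of A W \<subseteq> S_of A W3"
    using S_of_anti A1 B1 W3 by auto
  have ins: "t \<in> S_of A W1" "t' \<in> S_of A W1" "r \<in> S_of A W2" "r' \<in> S_of A W2"
    "t \<in> S_of A W3" "t' \<in> S_of A W3" "r \<in> S_of A W3" "r' \<in> S_of A W3"
    using sub a b A1 B1 by blast+
  have e1: "loc_cls A (S_of A W3) a t = loc_cls A (S_of A W3) a' t'"
    by (rule cls_shrink[OF A1(4) W3(1) W3(5) a(1) ins(1) A1(1) ins(2) A1(8)])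
  have e2: "loc_cls A (S_of A W3) b r = loc_cls A (S_of A W3) b' r'"
    by (rule cls_shrink[OF B1(4) W3(1) W3(6) b(1) ins(3) B1(1) ins(4) B1(8)])
  have e3: "loc_cls A (S_of A W3) (mu a b) (mu t r) = loc_cls A (S_of A W3) (mu a' b') (mu t' r')"
    by (rule mult_wd[OF m3 a(1) ins(5) A1(1) ins(6) b(1) ins(7) B1(1) ins(8) e1 e2])
  have kk: "k = germ A p W (loc_cls A (S_of A W) (mu a' b') (mu t' r'))"
    using k A1(3) B1(3) loc_mult[OF opn_mcl[OF W(1)] A1(1,2) B1(1,2)] unfolding presh_mult by simp
  have mU: "mcl (S_of A U)" "mcl (S_of A W)" using opn_mcl U W by auto
  have "germ A p U (loc_cls A (S_of A U) (mu a b) (mu t r)) = k"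
    unfolding kk
    apply (subst germ_cls_eq[OF U W(1) p W(2)])
    using a b A1 B1 mclD[OF mU(1)] mclD[OF mU(2)] W3 e3 by auto
  then show "k = germ A p U (loc_cls A (S_of A U) (mu a b) (mu t r))" by simp
qed

lemma transfer2:
  assumes "spec_open A U" "spec_open A W" "p \<in> U" "p \<in> W" "a \<in> Car" "t \<in> S_of A U"
    "a' \<in> Car" "t' \<in> S_of A W"
    "(W, loc_cls A (S_of A W) a' t') \<in> germ A p U (loc_cls A (S_of A U) a t)"
  obtains W1 where
    "spec_open A W1" "p \<in> W1" "W1 \<subseteq> U" "W1 \<subseteq> W"
    "loc_cls A (S_of A W1) a t = loc_cls A (S_of A W1) a' t'"
  using germ_rel_cls[OF assms(1-8)] assms(9) unfolding germ_mem by blast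

lemma stalk_add:
  assumes U: "spec_open A U" and p: "p \<in> U" and a: "a \<in> Car" "t \<in> S_of A U"
    and b: "b \<in> Car" "r \<in> S_of A U" and u: "u \<in> S_of A U"
    and sm: "(mu u (mu r a), mu u (mu t b)) \<in> Sm"
  shows "(germ A p U (loc_cls A (S_of A U) a t), germ A p U (loc_cls A (S_of A U) b r)) \<in> pr_summ (stalk A p)"
    "pr_add (stalk A p) (germ A p U (loc_cls A (S_of A U) a t)) (germ A p U (loc_cls A (S_of A U) b r))
     = germ A p U (loc_cls A (S_of A U) (ad (mu u (mu r a)) (mu u (mu t b))) (mu u (mu t r)))"
proof -
  let ?x = "loc_cls A (S_of A U) a t" and ?y = "loc_cls A (S_of A U) b r"
  have mU: "mcl (S_of A U)" using opn_mcl[OF U] .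
  show "(germ A p U ?x, germ A p U ?y) \<in> pr_summ (stalk A p)"
    unfolding stalk_def pring.select_convs
    using germ_in_stalk[OF U p a] germ_in_stalk[OF U p b] germ_self[OF U p a] germ_self[OF U p b]
      loc_add(1)[OF mU a b u sm] unfolding presh_summ by blast
  show "pr_add (stalk A p) (germ A p U ?x) (germ A p U ?y)
     = germ A p U (loc_cls A (S_of A U) (ad (mu u (mu r a)) (mu u (mu t b))) (mu u (mu t r)))"
    unfolding stalk_def pring.select_convs
  proof (rule someI2)
    show "\<exists>W x y. (W, x) \<in> germ A p U ?x \<and> (W, y) \<in> germ A p U ?y \<and> (x, y) \<in> pr_summ (presh A W) \<and>
       germ A p U (loc_cls A (S_of A U) (ad (mu u (mu r a)) (mu u (mu t b))) (mu u (mu t r))) = germ A p W (pr_add (presh A W) x y)"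
      using germ_self[OF U p a] germ_self[OF U p b] loc_add[OF mU a b u sm]
      unfolding presh_add presh_summ by metis
    fix k assume "\<exists>W x y. (W, x) \<in> germ A p U ?x \<and> (W, y) \<in> germ A p U ?y \<and> (x, y) \<in> pr_summ (presh A W) \<and>
       k = germ A p W (pr_add (presh A W) x y)"
    then obtain W x' y' where x': "(W, x') \<in> germ A p U ?x" and y': "(W, y') \<in> germ A p U ?y"
      and sW: "(x', y') \<in> pr_summ (presh A W)"
      and k: "k = germ A p W (pr_add (presh A W) x' y')" by blast
    have W: "spec_open A W" "p \<in> W" using germ_in_Dp[OF x'] by auto
    have mW: "mcl (S_of A W)" using opn_mcl[OF W(1)] .
    from sW obtain a1 s1 b1 t1 u1 where xq: "x' \<in> (Car \<times> S_of A W) // loc_rel A (S_of A W)"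
      and yq: "y' \<in> (Car \<times> S_of A W) // loc_rel A (S_of A W)"
      and r1: "(a1,s1) \<in> x'" "(b1,t1) \<in> y'" "u1 \<in> S_of A W"
      and sm1: "(mu u1 (mu t1 a1), mu u1 (mu s1 b1)) \<in> Sm"
      unfolding presh_summ loc_def pring.select_convs by blast
    have A1: "a1 \<in> Car" "s1 \<in> S_of A W" "x' = loc_cls A (S_of A W) a1 s1"
      using mem_quot[OF mW xq r1(1)] by auto
    have B1: "b1 \<in> Car" "t1 \<in> S_of A W" "y' = loc_cls A (S_of A W) b1 t1"
      using mem_quot[OF mW yq r1(2)] by auto
    obtain W1 where W1: "spec_open A W1" "p \<in> W1" "W1 \<subseteq> U" "W1 \<subseteq> W"
      "loc_cls A (S_of A W1) a t = loc_cls A (S_of A W1) a1 s1"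
      using transfer2[OF U W(1) p W(2) a A1(1,2)] x' A1(3) by metis
    obtain W2 where W2: "spec_open A W2" "p \<in> W2" "W2 \<subseteq> U" "W2 \<subseteq> W"
      "loc_cls A (S_of A W2) b r = loc_cls A (S_of A W2) b1 t1"
      using transfer2[OF U W(1) p W(2) b B1(1,2)] y' B1(3) by metis
    define W3 where "W3 = W1 \<inter> W2"
    have W3: "spec_open A W3" "p \<in> W3" "W3 \<subseteq> U" "W3 \<subseteq> W" "W3 \<subseteq> W1" "W3 \<subseteq> W2"
      using spec_open_Int W1 W2 unfolding W3_def by auto
    have m3: "mcl (S_of A W3)" using opn_mcl W3 by auto
    have sub: "S_of A U \<subseteq> S_of A W1" "S_of A W \<subseteq> S_of A W1" "S_of A U \<subseteq> S_of A W2" "S_of A W \<subseteq> S_of A W2"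
      "S_of A U \<subseteq> S_of A W3" "S_of A W \<subseteq> S_of A W3"
      using S_of_anti W1 W2 W3 by auto
    have ins: "t \<in> S_of A W1" "s1 \<in> S_of A W1" "r \<in> S_of A W2" "t1 \<in> S_of A W2"
      "t \<in> S_of A W3" "s1 \<in> S_of A W3" "r \<in> S_of A W3" "t1 \<in> S_of A W3"
      "u \<in> S_of A W3" "u1 \<in> S_of A W3"
      using sub a b A1 B1 u r1(3) by blast+
    have e1: "loc_cls A (S_of A W3) a t = loc_cls A (S_of A W3) a1 s1"
      by (rule cls_shrink[OF W1(1) W3(1) W3(5) a(1) ins(1) A1(1) ins(2) W1(5)])
    have e2: "loc_cls A (S_of A W3) b r = loc_cls A (S_of A W3) b1 t1"
      by (rule cls_shrink[OF W2(1) W3(1) W3(6) b(1) ins(3) B1(1) ins(4) W2(5)])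
    have e3: "loc_cls A (S_of A W3) (ad (mu u (mu r a)) (mu u (mu t b))) (mu u (mu t r)) =
        loc_cls A (S_of A W3) (ad (mu u1 (mu t1 a1)) (mu u1 (mu s1 b1))) (mu u1 (mu s1 t1))"
      by (rule add_wd[OF m3 a(1) ins(5) A1(1) ins(6) b(1) ins(7) B1(1) ins(8) e1 e2 ins(9,10) sm sm1])
    have kk: "k = germ A p W (loc_cls A (S_of A W) (ad (mu u1 (mu t1 a1)) (mu u1 (mu s1 b1))) (mu u1 (mu s1 t1)))"
      using k A1(3) B1(3) loc_add(2)[OF mW A1(1,2) B1(1,2) r1(3) sm1] unfolding presh_add by simp
    have mU: "mcl (S_of A U)" "mcl (S_of A W)" using opn_mcl U W by auto
    have C: "mu u (mu r a) \<in> Car" "mu u (mu t b) \<in> Car" "mu u (mu t r) \<in> S_of A U"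
      "mu u1 (mu t1 a1) \<in> Car" "mu u1 (mu s1 b1) \<in> Car" "mu u1 (mu s1 t1) \<in> S_of A W"
      using a b u A1 B1 r1(3) mclD[OF mU(1)] mclD[OF mU(2)] by auto
    have "germ A p U (loc_cls A (S_of A U) (ad (mu u (mu r a)) (mu u (mu t b))) (mu u (mu t r))) = k"
      unfolding kk
      apply (subst germ_cls_eq[OF U W(1) p W(2)])
      using C sm sm1 W3 e3 by auto
    then show "k = germ A p U (loc_cls A (S_of A U) (ad (mu u (mu r a)) (mu u (mu t b))) (mu u (mu t r)))" by simp
  qed
qed

end

context PR
begin

lemma loc_zero: "pr_zero (loc A S) = loc_cls A S zer one"
  unfolding loc_def by simp

lemma loc_one: "pr_one (loc A S) = loc_cls A S one one"
  unfolding loc_def by simp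

lemma main:
  assumes sC: "s \<in> Car"
  shows "\<exists>f. pr_mono (loc_at A s) (OX A (basicD A s)) f"
proof -
  define U where "U = basicD A s"
  define T where "T = pows s"
  have LT: "loc_at A s = loc A T" unfolding loc_at_def T_def pows_def ..
  have U: "spec_open A U" unfolding U_def using spec_open_basic[OF sC] .
  have USp: "U \<subseteq> Spec_pts A" unfolding U_def by (rule basicD_sub)
  have mT: "mcl T" unfolding T_def using mcl_pows[OF sC] .
  have mU: "mcl (S_of A U)" using opn_mcl[OF U] .
  have TU: "T \<subseteq> S_of A U" unfolding T_def U_def using pows_S_of[OF sC] .
  define f where "f = (\<lambda>X p. if p \<in> U then germ A p U (presh_res A U U X) else undefined)"
  have f_cls: "f (loc_cls A T a t) = (\<lambda>p. if p \<in> U then germ A p U (loc_cls A (S_of A U) a t) else undefined)"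
    if "a \<in> Car" "t \<in> T" for a t
    unfolding f_def presh_res_cls[OF mT USp TU that, where U=U] ..
  have f_OX: "f (loc_cls A T a t) \<in> OX_carrier A U" if a: "a \<in> Car" "t \<in> T" for a t
  proof -
    have t: "t \<in> S_of A U" using TU a by auto
    show ?thesis
      unfolding f_cls[OF a] OX_carrier_def
      using germ_in_stalk[OF U _ a(1) t] U cls_in[OF a(1) t] presh_carrier
      by (auto intro!: exI[of _ U])
  qed
  have carT: "pr_carrier (loc A T) = (Car \<times> T) // loc_rel A T" by (rule loc_carrier)
  have hom: "pr_hom (loc A T) (OX A U) f"
    unfolding pr_hom_def
  proof (intro conjI ballI)
    show "f ` pr_carrier (loc A T) \<subseteq> pr_carrier (OX A U)"
    proof
      fix Y assume "Y \<in> f ` pr_carrier (loc A T)"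
      then obtain X where X: "X \<in> (Car \<times> T) // loc_rel A T" "Y = f X" unfolding carT by auto
      then obtain a t where "a \<in> Car" "t \<in> T" "X = loc_cls A T a t" using quotE[OF mT] by metis
      then show "Y \<in> pr_carrier (OX A U)" using f_OX X unfolding OX_def by simp
    qed
  next
    have o1: "one \<in> T" "one \<in> S_of A U" "one \<in> S_of A (Spec_pts A)"
      using mclD(2)[OF mT] mclD(2)[OF mU] mclD(2)[OF mcl_S_of[of "Spec_pts A"]] by auto
    have geq: "germ A p U (loc_cls A (S_of A U) c one) =
        germ A p (Spec_pts A) (loc_cls A (S_of A (Spec_pts A)) c one)" if p: "p \<in> U" and c: "c \<in> Car" for p c
      apply (subst germ_cls_eq[OF U spec_open_Spec p])
      using p USp c o1 U by auto
    show "f (pr_zero (loc A T)) = pr_zero (OX A U)"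
      unfolding OX_def stalk_def presh_def pring.select_convs loc_zero
      using f_cls[OF zer_C o1(1)] geq[OF _ zer_C] by (auto intro!: ext)
    show "f (pr_one (loc A T)) = pr_one (OX A U)"
      unfolding OX_def stalk_def presh_def pring.select_convs loc_one
      using f_cls[OF one_C o1(1)] geq[OF _ one_C] by (auto intro!: ext)
  next
    fix X Y assume X: "X \<in> pr_carrier (loc A T)" and Y: "Y \<in> pr_carrier (loc A T)"
    obtain a t where a: "a \<in> Car" "t \<in> T" "X = loc_cls A T a t" using quotE[OF mT] X carT by metis
    obtain b r where b: "b \<in> Car" "r \<in> T" "Y = loc_cls A T b r" using quotE[OF mT] Y carT by metis
    have tr: "t \<in> S_of A U" "r \<in> S_of A U" using TU a b by auto
    have ab: "mu a b \<in> Car" "mu t r \<in> T" using mclD(3)[OF mT] a b by auto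
    show "f (pr_mult (loc A T) X Y) = pr_mult (OX A U) (f X) (f Y)"
      unfolding a(3) b(3) loc_mult[OF mT a(1,2) b(1,2)] OX_def pring.select_convs
        f_cls[OF a(1,2)] f_cls[OF b(1,2)] f_cls[OF ab]
      using stalk_mult[OF U _ a(1) tr(1) b(1) tr(2)] by (auto intro!: ext)
  next
    fix XY assume "XY \<in> pr_summ (loc A T)"
    then obtain X Y where XY: "XY = (X,Y)" "(X,Y) \<in> pr_summ (loc A T)" by (cases XY) auto
    from XY(2) obtain a t b r u where xq: "X \<in> (Car \<times> T) // loc_rel A T"
      and yq: "Y \<in> (Car \<times> T) // loc_rel A T"
      and r1: "(a,t) \<in> X" "(b,r) \<in> Y" "u \<in> T"
      and sm: "(mu u (mu r a), mu u (mu t b)) \<in> Sm"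
      unfolding loc_def pring.select_convs by blast
    have a: "a \<in> Car" "t \<in> T" "X = loc_cls A T a t" using mem_quot[OF mT xq r1(1)] by auto
    have b: "b \<in> Car" "r \<in> T" "Y = loc_cls A T b r" using mem_quot[OF mT yq r1(2)] by auto
    have tr: "t \<in> S_of A U" "r \<in> S_of A U" "u \<in> S_of A U" using TU a b r1 by auto
    have C: "mu u (mu r a) \<in> Car" "mu u (mu t b) \<in> Car" "mu u (mu t r) \<in> T"
      using a b r1(3) mclD[OF mT] by auto
    have s1: "(f X, f Y) \<in> pr_summ (OX A U)"
      unfolding OX_def pring.select_convs
      using f_OX[OF a(1,2)] f_OX[OF b(1,2)] f_cls[OF a(1,2)] f_cls[OF b(1,2)]
        stalk_add(1)[OF U _ a(1) tr(1) b(1) tr(2) tr(3) sm] a(3) b(3) by auto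
    have s2: "f (pr_add (loc A T) X Y) = pr_add (OX A U) (f X) (f Y)"
      unfolding a(3) b(3) loc_add(2)[OF mT a(1,2) b(1,2) r1(3) sm] OX_def pring.select_convs
        f_cls[OF a(1,2)] f_cls[OF b(1,2)] f_cls[OF add_C[OF sm] C(3)]
      using stalk_add(2)[OF U _ a(1) tr(1) b(1) tr(2) tr(3) sm] by (auto intro!: ext)
    show "case XY of (a, b) \<Rightarrow> (f a, f b) \<in> pr_summ (OX A U) \<and>
        f (pr_add (loc A T) a b) = pr_add (OX A U) (f a) (f b)"
      using s1 s2 XY(1) by simp
  qed
  have inj: "inj_on f (pr_carrier (loc A T))"
  proof (rule inj_onI)
    fix X Y assume X: "X \<in> pr_carrier (loc A T)" and Y: "Y \<in> pr_carrier (loc A T)" and fe: "f X = f Y"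
    obtain a t where a: "a \<in> Car" "t \<in> T" "X = loc_cls A T a t" using quotE[OF mT] X carT by metis
    obtain b r where b: "b \<in> Car" "r \<in> T" "Y = loc_cls A T b r" using quotE[OF mT] Y carT by metis
    have tr: "t \<in> S_of A U" "r \<in> S_of A U" "t \<in> Car" "r \<in> Car" using TU a b mclD[OF mT] by auto
    define I where "I = {u \<in> Car. mu u (mu r a) = mu u (mu t b)}"
    have I: "pr_ideal A I"
      unfolding pr_ideal_def
    proof (intro conjI ballI impI)
      show "I \<subseteq> Car" unfolding I_def by auto
      show "zer \<in> I" unfolding I_def using a b tr by auto
    next
      fix x y assume x: "x \<in> I" and y: "y \<in> I" and s: "(x,y) \<in> Sm"
      have c: "mu r a \<in> Car" "mu t b \<in> Car" using a b tr by auto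
      show "ad x y \<in> I" unfolding I_def
        using distr[OF s c(1)] distr[OF s c(2)] x y s unfolding I_def by auto
    next
      fix x c assume x: "x \<in> I" and c: "c \<in> Car"
      have "mu (mu c x) (mu r a) = mu c (mu x (mu r a))" "mu (mu c x) (mu t b) = mu c (mu x (mu t b))"
        using x c a b tr unfolding I_def by (auto simp: mu_assoc)
      then show "mu c x \<in> I" using x c unfolding I_def by auto
    qed
    have "I \<inter> T \<noteq> {}"
    proof
      assume dis: "I \<inter> T = {}"
      obtain P where P: "pr_prime A P" "I \<subseteq> P" "P \<inter> T = {}"
        using prime_exists[OF I mclD(2)[OF mT] _ dis] mclD(3)[OF mT] by blast
      have "s \<in> T" unfolding T_def using s_pows[OF sC] .
      then have PU: "P \<in> U" using P unfolding U_def basicD_def Spec_pts_def by auto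
      have "germ A P U (loc_cls A (S_of A U) a t) = germ A P U (loc_cls A (S_of A U) b r)"
        using fun_cong[OF fe, of P] f_cls[OF a(1,2)] f_cls[OF b(1,2)] a(3) b(3) PU by simp
      then obtain W where W: "spec_open A W" "P \<in> W" "W \<subseteq> U"
          "loc_cls A (S_of A W) a t = loc_cls A (S_of A W) b r"
        using germ_cls_eq[OF U U PU PU a(1) tr(1) b(1) tr(2)] by auto
      have "t \<in> S_of A W" "r \<in> S_of A W" using S_of_anti[OF W(3)] tr by auto
      then obtain u where u: "u \<in> S_of A W" "mu u (mu r a) = mu u (mu t b)"
        using cls_eq[OF opn_mcl[OF W(1)] a(1) _ b(1)] W(4) by auto
      have "u \<in> I" using u unfolding I_def S_of_def by auto
      moreover have "u \<notin> P" using u W(2) unfolding S_of_def by auto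
      ultimately show False using P(2) by auto
    qed
    then obtain u where "u \<in> I" "u \<in> T" by auto
    then show "X = Y" unfolding a(3) b(3) using cls_eq[OF mT a(1,2) b(1,2)] unfolding I_def by auto
  qed
  show ?thesis unfolding pr_mono_def LT U_def[symmetric] using hom inj by blast
qed

end

theorem mainTheorem12:
  fixes A :: "'a pring" and s :: 'a
  assumes "partial_ring A"
    and "s \<in> pr_carrier A"
  shows "\<exists>f. pr_mono (loc_at A s) (OX A (basicD A s)) f"
proof -
  interpret PR A by unfold_locales (fact assms(1))
  show ?thesis using main assms(2) by blast
qed

end
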